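(* Let $\bm\varphi \sim \mathfrak F(m,n,\Delta)$ with $\Delta=c\log n$ and $m=\alpha 2^{\Delta} n$, where $c,\alpha>0$ are constants and $c\ge 40$. Let $(\bm X,\bm Y)$ be a uniformly random partition of $[n]$. Then with high probability $(\bm X,\bm Y)$ is a $\delta$-good partition for $\bm\varphi$, for every constant $\delta\le 1/10$.
   Context: $\mathfrak F(m,n,\Delta)$: random $\Delta$-CNF over variables $[n]$ with $m$ clauses, each clause independently choosing $\Delta$ distinct variables uniformly from the $\binom n\Delta$ possibilities, with uniformly random signs. For a CNF $\varphi=\bigwedge_{i\in[m]}C_i$ over variables $[n]$ and a partition $A\sqcup B=[n]$, let $G_A=([m],A,E_A)$ be the bipartite graph joining clause $i$ to each variable of $A$ occurring in $C_i$, and similarly $G_B$. Let $\textsc{Error}_A\subseteq[m]$ (resp. $\textsc{Error}_B$) be the set of clauses whose degree in $G_A$ (resp. $G_B$) exceeds $(1-\delta)\Delta$. A bipartite graph $G=(L,R,E)$ is an $(r,\Delta,\alpha'\Delta)$-expander if all left vertices have degree at most $\Delta$ and every $S\subseteq L$ with $|S|\le r$ has $|N(S)|\ge \alpha'\Delta|S|$. $(A,B)$ is a $\delta$-good partition for $\varphi$ if: (1) $\Pr_{\bm x\sim\{0,1\}^A}[\forall i\in \textsc{Error}_A:\ C_i(\bm x,\cdot)\equiv 1]\ge 1-2^{-\Omega(\Delta)}$; (2) $\Pr_{\bm y\sim\{0,1\}^B}[\forall i\in \textsc{Error}_B:\ C_i(\cdot,\bm y)\equiv 1]\ge 1-2^{-\Omega(\Delta)}$;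 (3) $G_A-\textsc{Error}_A-\textsc{Error}_B$ and $G_B-\textsc{Error}_A-\textsc{Error}_B$ are $(r,\Delta,\delta\Delta/2)$-expanders with $r=\Omega(n/\Delta)$. Hidden constants depend on $\delta$ (and $c,\alpha$). *)

theory Defs
  imports "HOL-Probability.Probability"
begin

text \<open>A clause is a pair (S, s): S is its set of variables, s v gives the sign of
  the literal on variable v (the literal on v is satisfied by an assignment z iff z v = s v).
  A CNF with m clauses is a function from clause indices {0..<m} to clauses.\<close>

type_synonym clause = "nat set \<times> (nat \<Rightarrow> bool)"
type_synonym cnf = "nat \<Rightarrow> clause"

definition clause_space :: "nat \<Rightarrow> nat \<Rightarrow> clause set" where
  "clause_space n \<Delta> =
     {(S, s). S \<subseteq> {0..<n} \<and> card S = \<Delta> \<and> s \<in> S \<rightarrow>\<^sub>E (UNIV :: bool set)}"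

definition cnf_space :: "nat \<Rightarrow> nat \<Rightarrow> nat \<Rightarrow> cnf set" where
  "cnf_space m n \<Delta> = {0..<m} \<rightarrow>\<^sub>E clause_space n \<Delta>"

text \<open>The random formula F(m,n,Delta): m independent uniform clauses
  (uniform distribution on the product set).\<close>
definition random_cnf :: "nat \<Rightarrow> nat \<Rightarrow> nat \<Rightarrow> cnf pmf" where
  "random_cnf m n \<Delta> = pmf_of_set (cnf_space m n \<Delta>)"

text \<open>Uniformly random partition (X, [n] - X) of [n]: X uniform in Pow [n].\<close>
definition random_partition :: "nat \<Rightarrow> nat set pmf" where
  "random_partition n = pmf_of_set (Pow {0..<n})"

definition clause_sat :: "clause \<Rightarrow> (nat \<Rightarrow> bool) \<Rightarrow> bool" where
  "clause_sat C z \<longleftrightarrow> (\<exists>v \<in> fst C. z v = snd C v)"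

text \<open>C(x, .) is identically 1: for every assignment y to the variables of B,
  the combined assignment satisfies C.\<close>
definition clause_fixed :: "clause \<Rightarrow> nat set \<Rightarrow> nat set \<Rightarrow> (nat \<Rightarrow> bool) \<Rightarrow> bool" where
  "clause_fixed C A B x \<longleftrightarrow>
     (\<forall>y \<in> B \<rightarrow>\<^sub>E (UNIV :: bool set). clause_sat C (\<lambda>v. if v \<in> A then x v else y v))"

definition error_set :: "real \<Rightarrow> nat \<Rightarrow> nat \<Rightarrow> cnf \<Rightarrow> nat set \<Rightarrow> nat set" where
  "error_set \<delta> m \<Delta> \<phi> A = {i \<in> {0..<m}. real (card (fst (\<phi> i) \<inter> A)) > (1 - \<delta>) * real \<Delta>}"

text \<open>Bipartite graph with left vertex set L and neighbourhood function N
  is an (r, D, d)-expander.\<close>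
definition bip_expander :: "'l set \<Rightarrow> ('l \<Rightarrow> 'r set) \<Rightarrow> real \<Rightarrow> nat \<Rightarrow> real \<Rightarrow> bool" where
  "bip_expander L N r D d \<longleftrightarrow>
     (\<forall>i \<in> L. card (N i) \<le> D) \<and>
     (\<forall>S. S \<subseteq> L \<and> real (card S) \<le> r \<longrightarrow> real (card (\<Union>i \<in> S. N i)) \<ge> d * real (card S))"

text \<open>delta-good partition, with explicit constants eps (for 2^(-Omega(Delta)))
  and rho (for r = Omega(n/Delta)).\<close>
definition good_partition ::
  "real \<Rightarrow> real \<Rightarrow> real \<Rightarrow> nat \<Rightarrow> nat \<Rightarrow> nat \<Rightarrow> cnf \<Rightarrow> nat set \<Rightarrow> nat set \<Rightarrow> bool" where
  "good_partition \<delta> \<epsilon> \<rho> m n \<Delta> \<phi> A B \<longleftrightarrow>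
     (let EA = error_set \<delta> m \<Delta> \<phi> A; EB = error_set \<delta> m \<Delta> \<phi> B;
          L = {0..<m} - EA - EB; r = \<rho> * real n / real \<Delta> in
       measure_pmf.prob (pmf_of_set (A \<rightarrow>\<^sub>E (UNIV :: bool set)))
         {x. \<forall>i \<in> EA. clause_fixed (\<phi> i) A B x} \<ge> 1 - 2 powr (- \<epsilon> * real \<Delta>) \<and>
       measure_pmf.prob (pmf_of_set (B \<rightarrow>\<^sub>E (UNIV :: bool set)))
         {y. \<forall>i \<in> EB. clause_fixed (\<phi> i) B A y} \<ge> 1 - 2 powr (- \<epsilon> * real \<Delta>) \<and>
       bip_expander L (\<lambda>i. fst (\<phi> i) \<inter> A) r \<Delta> (\<delta> * real \<Delta> / 2) \<and>
       bip_expander L (\<lambda>i. fst (\<phi> i) \<inter> B) r \<Delta> (\<delta> * real \<Delta> / 2))"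

definition width :: "real \<Rightarrow> nat \<Rightarrow> nat" where
  "width c n = nat \<lceil>c * log 2 (real n)\<rceil>"

definition num_clauses :: "real \<Rightarrow> real \<Rightarrow> nat \<Rightarrow> nat" where
  "num_clauses \<alpha> c n = nat \<lfloor>\<alpha> * 2 ^ width c n * real n\<rfloor>"

end

theory Submission
  imports Defs "HOL-Real_Asymp.Real_Asymp"
begin


lemma pmf_of_set_pair:
  assumes "finite A" "A \<noteq> {}" "finite B" "B \<noteq> {}"
  shows "pair_pmf (pmf_of_set A) (pmf_of_set B) = pmf_of_set (A \<times> B)"
proof (rule pmf_eqI)
  fix z :: "'a \<times> 'b"
  obtain a b where z: "z = (a, b)" by (cases z)
  show "pmf (pair_pmf (pmf_of_set A) (pmf_of_set B)) z = pmf (pmf_of_set (A \<times> B)) z"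
    using assms by (simp add: z pmf_pair card_cartesian_product indicator_def)
qed

lemma choose_ratio_le:
  fixes t n k :: nat
  assumes "t \<le> n"
  shows "real (t choose k) * real n ^ k \<le> real (n choose k) * real t ^ k"
proof (induction k)
  case 0 then show ?case by simp
next
  case (Suc k)
  have e1: "real (t choose Suc k) * real (Suc k) = real (t choose k) * (real t - real k)"
  proof (cases "k \<le> t")
    case True
    have "(t choose Suc k) * Suc k = (t choose k) * (t - k)"
      by (metis binomial_absorb_comp binomial_absorption mult.commute)
    then show ?thesis using True by (metis of_nat_diff of_nat_mult)
  next
    case False then show ?thesis by (simp add: binomial_eq_0)
  qed
  have e2: "real (n choose Suc k) * real (Suc k) = real (n choose k) * (real n - real k)"
  proof (cases "k \<le> n")
    case True
    have "(n choose Suc k) * Suc k = (n choose k) * (n - k)"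
      by (metis binomial_absorb_comp binomial_absorption mult.commute)
    then show ?thesis using True by (metis of_nat_diff of_nat_mult)
  next
    case False then show ?thesis using assms by (simp add: binomial_eq_0)
  qed
  show ?case
  proof (cases "k \<le> t")
    case False
    then have z: "t choose Suc k = 0" by (simp add: binomial_eq_0)
    show ?thesis unfolding z by simp
  next
    case True
    have a: "(real t - real k) * real n \<le> (real n - real k) * real t"
      using assms True by (simp add: algebra_simps mult_left_mono)
    have "real (t choose Suc k) * real n ^ Suc k * real (Suc k)
        = (real (t choose Suc k) * real (Suc k)) * real n ^ Suc k" by (simp only: mult_ac)
    also have "\<dots> = real (t choose k) * (real t - real k) * real n ^ Suc k" using e1 by simp
    also have "\<dots> = (real (t choose k) * real n ^ k) * ((real t - real k) * real n)"
      by (simp add: mult_ac)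
    also have "\<dots> \<le> (real (n choose k) * real t ^ k) * ((real t - real k) * real n)"
      using Suc.IH True by (intro mult_right_mono) auto
    also have "\<dots> \<le> (real (n choose k) * real t ^ k) * ((real n - real k) * real t)"
      using a by (intro mult_left_mono) auto
    also have "\<dots> = real (n choose k) * (real n - real k) * real t ^ Suc k"
      by (simp add: mult_ac)
    also have "\<dots> = (real (n choose Suc k) * real (Suc k)) * real t ^ Suc k"
      using e2 by simp
    also have "\<dots> = real (n choose Suc k) * real t ^ Suc k * real (Suc k)"
      by (simp only: mult_ac)
    finally show ?thesis by simp
  qed
qed

lemma pow_div_fact_le_exp:
  fixes x :: real assumes "0 \<le> x"
  shows "x ^ k / fact k \<le> exp x"
proof -
  have "x ^ k / fact k = (\<Sum>i\<in>{k}. x ^ i / fact i)" by simp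
  also have "\<dots> \<le> (\<Sum>i. x ^ i / fact i)"
    using assms summable_exp[of x] by (intro sum_le_suminf) (auto simp: divide_inverse mult.commute)
  also have "\<dots> = exp x" by (simp add: exp_def inverse_eq_divide scaleR_conv_of_real)
  finally show ?thesis .
qed



lemma card_inter_eq:
  assumes "finite U" "S \<subseteq> U"
  shows "card {X \<in> Pow U. card (S \<inter> X) = j} = (card S choose j) * 2 ^ (card U - card S)"
proof -
  have fS: "finite S" using assms finite_subset by blast
  let ?P = "{Y. Y \<subseteq> S \<and> card Y = j} \<times> Pow (U - S)"
  have inj: "inj_on (\<lambda>(Y, Z). Y \<union> Z) ?P"
  proof (rule inj_onI)
    fix p q assume hp: "p \<in> ?P" and hq: "q \<in> ?P" and e: "(\<lambda>(Y, Z). Y \<union> Z) p = (\<lambda>(Y, Z). Y \<union> Z) q"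
    obtain Y Z where p: "p = (Y, Z)" by (cases p)
    obtain Y' Z' where q: "q = (Y', Z')" by (cases q)
    have h: "Y \<subseteq> S" "Z \<subseteq> U - S" "Y' \<subseteq> S" "Z' \<subseteq> U - S" "Y \<union> Z = Y' \<union> Z'"
      using hp hq e by (auto simp: p q)
    then have "Y = (Y \<union> Z) \<inter> S" "Y' = (Y' \<union> Z') \<inter> S" "Z = (Y \<union> Z) - S" "Z' = (Y' \<union> Z') - S" by auto
    then show "p = q" using h(5) p q by metis
  qed
  have img: "(\<lambda>(Y, Z). Y \<union> Z) ` ?P = {X \<in> Pow U. card (S \<inter> X) = j}"
  proof (rule set_eqI, rule iffI)
    fix X assume "X \<in> (\<lambda>(Y, Z). Y \<union> Z) ` ?P"
    then obtain Y Z where h: "Y \<subseteq> S" "card Y = j" "Z \<subseteq> U - S" "X = Y \<union> Z" by auto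
    then have "S \<inter> X = Y" by auto
    then show "X \<in> {X \<in> Pow U. card (S \<inter> X) = j}" using h assms by auto
  next
    fix X assume h: "X \<in> {X \<in> Pow U. card (S \<inter> X) = j}"
    then have "(S \<inter> X, X - S) \<in> ?P" by auto
    moreover have "X = (\<lambda>(Y, Z). Y \<union> Z) (S \<inter> X, X - S)" by auto
    ultimately show "X \<in> (\<lambda>(Y, Z). Y \<union> Z) ` ?P" by blast
  qed
  have "card {X \<in> Pow U. card (S \<inter> X) = j} = card ?P"
    using card_image[OF inj] img by simp
  also have "\<dots> = (card S choose j) * 2 ^ (card U - card S)"
    using assms fS by (simp add: card_cartesian_product n_subsets card_Pow card_Diff_subset)
  finally show ?thesis .
qed

lemma card_inter_pred:
  assumes "finite U" "S \<subseteq> U"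
  shows "card {X \<in> Pow U. P (card (S \<inter> X))} =
         (\<Sum>j\<in>{j. j \<le> card S \<and> P j}. (card S choose j) * 2 ^ (card U - card S))"
proof -
  have fS: "finite S" using assms finite_subset by blast
  have eq: "{X \<in> Pow U. P (card (S \<inter> X))} = (\<Union>j\<in>{j. j \<le> card S \<and> P j}. {X \<in> Pow U. card (S \<inter> X) = j})"
    using fS by (auto intro: card_mono)
  have "card {X \<in> Pow U. P (card (S \<inter> X))} = (\<Sum>j\<in>{j. j \<le> card S \<and> P j}. card {X \<in> Pow U. card (S \<inter> X) = j})"
    unfolding eq using assms by (intro card_UN_disjoint) auto
  then show ?thesis using card_inter_eq[OF assms] by simp
qed

lemma five_le: "(5::real) \<le> 2 powr (12/5)"
proof -
  have "(2 powr (12/5::real)) ^ 5 = 2 powr 12" by (simp add: powr_realpow[symmetric] powr_powr)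
  also have "\<dots> = 4096" by simp
  finally have "(5::real) ^ 5 \<le> (2 powr (12/5)) ^ 5" by simp
  show ?thesis
  proof (rule ccontr)
    assume "\<not> ?thesis"
    then have "(2 powr (12/5::real)) ^ 5 < 5 ^ 5" by (intro power_strict_mono) auto
    with \<open>(5::real) ^ 5 \<le> (2 powr (12/5)) ^ 5\<close> show False by simp
  qed
qed



lemma four_pow: "(4::real) ^ j = 2 powr (2 * real j)"
proof -
  have "(4::real) ^ j = 2 ^ (2 * j)" by (simp add: power_mult)
  also have "\<dots> = 2 powr (real (2 * j))" by (rule powr_realpow[symmetric]) simp
  finally show ?thesis by simp
qed

lemma quarter_pow: "(1/4::real) ^ j = 2 powr (- 2 * real j)"
proof -
  have "(1/4::real) ^ j = 1 / 4 ^ j" by (simp add: power_one_over)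
  also have "\<dots> = 1 / 2 powr (2 * real j)" by (subst four_pow) (rule refl)
  also have "\<dots> = 2 powr (- (2 * real j))" by (rule powr_minus_divide[symmetric])
  finally show ?thesis by simp
qed

lemma tail_sum:
  fixes D :: nat and \<delta> :: real
  assumes "0 < \<delta>" "\<delta> \<le> 1/10"
  shows "real (\<Sum>j\<in>{j. j \<le> D \<and> ((1-\<delta>)*D < real j \<or> (1-\<delta>)*D < real D - real j)}. D choose j)
         \<le> 2 * 2 powr (0.6 * D)"
proof -
  define J where "J = {j. j \<le> D \<and> ((1-\<delta>)*D < real j \<or> (1-\<delta>)*D < real D - real j)}"
  define w where "w j = 4^j * 2 powr (-1.8*D) + (1/4)^j * 2 powr (0.2*D)" for j :: nat
  have fJ: "finite J" unfolding J_def by auto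
  have J: "J \<subseteq> {..D}" unfolding J_def by auto
  have w1: "1 \<le> w j" if "j \<in> J" for j
  proof -
    have "(1-\<delta>)*D < real j \<or> (1-\<delta>)*D < real D - real j" using that unfolding J_def by auto
    then show ?thesis
    proof
      assume h: "(1-\<delta>)*D < real j"
      have "0.9 * D \<le> (1-\<delta>)*D" using assms by (intro mult_right_mono) auto
      then have "1 \<le> 2 powr (2 * real j + (-1.8*D))" using h by (intro ge_one_powr_ge_zero) auto
      moreover have "4^j * 2 powr (-1.8*D) = 2 powr (2 * real j + (-1.8*D))" by (simp only: four_pow powr_add)
      ultimately have "1 \<le> 4^j * 2 powr (-1.8*D)" by simp
      moreover have "0 \<le> (1/4::real)^j * 2 powr (0.2*D)" by simp
      ultimately show ?thesis unfolding w_def by linarith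
    next
      assume h: "(1-\<delta>)*D < real D - real j"
      have "\<delta> * D \<le> 0.1 * D" using assms by (intro mult_right_mono) auto
      then have "1 \<le> 2 powr (- 2 * real j + 0.2*D)" using h by (intro ge_one_powr_ge_zero) (auto simp: algebra_simps)
      moreover have "(1/4)^j * 2 powr (0.2*D) = 2 powr (- 2 * real j + 0.2*D)" by (simp only: quarter_pow powr_add)
      ultimately have "1 \<le> (1/4)^j * 2 powr (0.2*D)" by simp
      moreover have "0 \<le> (4::real)^j * 2 powr (-1.8*D)" by simp
      ultimately show ?thesis unfolding w_def by linarith
    qed
  qed
  have w0: "0 \<le> w j" for j unfolding w_def by simp
  have b1: "(\<Sum>j\<le>D. real (D choose j) * 4^j * 1^(D-j)) = (4+1)^D"
    by (rule binomial_ring[symmetric])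
  have b2: "(\<Sum>j\<le>D. real (D choose j) * (1/4)^j * 1^(D-j)) = (1/4+1)^D"
    by (rule binomial_ring[symmetric])
  have "real (\<Sum>j\<in>J. D choose j) = (\<Sum>j\<in>J. real (D choose j) * 1)" by simp
  also have "\<dots> \<le> (\<Sum>j\<in>J. real (D choose j) * w j)"
    by (intro sum_mono mult_left_mono w1) auto
  also have "\<dots> \<le> (\<Sum>j\<le>D. real (D choose j) * w j)"
    using J w0 by (intro sum_mono2) auto
  also have "\<dots> = 2 powr (-1.8*D) * (\<Sum>j\<le>D. real (D choose j) * 4^j * 1^(D-j))
                 + 2 powr (0.2*D) * (\<Sum>j\<le>D. real (D choose j) * (1/4)^j * 1^(D-j))"
    unfolding w_def sum_distrib_left sum.distrib[symmetric] by (intro sum.cong refl) (simp add: algebra_simps)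
  also have "\<dots> = 2 powr (-1.8*D) * 5^D + 2 powr (0.2*D) * (5/4)^D"
    unfolding b1 b2 by simp
  also have "\<dots> = 2 * (2 powr (-1.8*D) * 5^D)"
  proof -
    have "(5/4::real)^D = 5^D * (1/4)^D" by (simp add: power_divide)
    also have "\<dots> = 5^D * 2 powr (- 2 * real D)" by (subst quarter_pow) (rule refl)
    finally have "2 powr (0.2*D) * (5/4::real)^D = 5^D * (2 powr (- 2 * real D) * 2 powr (0.2*D))"
      by simp
    also have "\<dots> = 5^D * 2 powr (- 2 * real D + 0.2*D)" by (simp only: powr_add)
    also have "- 2 * real D + 0.2*D = -1.8*D" by simp
    finally show ?thesis by simp
  qed
  also have "\<dots> \<le> 2 * (2 powr (-1.8*D) * 2 powr (12/5 * D))"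
  proof -
    have "(5::real)^D \<le> (2 powr (12/5))^D" using five_le by (intro power_mono) auto
    also have "\<dots> = 2 powr (12/5 * D)" by (subst powr_realpow[symmetric]) (auto simp: powr_powr)
    finally show ?thesis by simp
  qed
  also have "\<dots> = 2 * 2 powr (-1.8*D + 12/5 * D)" by (simp only: powr_add)
  also have "-1.8*D + 12/5 * D = 0.6 * D" by simp
  finally show ?thesis unfolding J_def by simp
qed



lemma cs_eq: "clause_space n D = Sigma {S. S \<subseteq> {0..<n} \<and> card S = D} (\<lambda>S. S \<rightarrow>\<^sub>E (UNIV :: bool set))"
  unfolding clause_space_def by auto

lemma card_funs: "finite S \<Longrightarrow> card (S \<rightarrow>\<^sub>E (UNIV :: bool set)) = 2 ^ card S"
  by (simp add: card_PiE)

lemma finite_funs: "S \<subseteq> {0..<n::nat} \<Longrightarrow> finite (S \<rightarrow>\<^sub>E (UNIV :: bool set))"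
proof -
  assume "S \<subseteq> {0..<n}"
  then have "finite S" by (rule finite_subset) simp
  then show ?thesis by (intro finite_PiE) auto
qed

lemma card_cs_pred:
  "card {C \<in> clause_space n D. Q (fst C)} = card {S. S \<subseteq> {0..<n} \<and> card S = D \<and> Q S} * 2 ^ D"
proof -
  have e: "{C \<in> clause_space n D. Q (fst C)} = Sigma {S. S \<subseteq> {0..<n} \<and> card S = D \<and> Q S} (\<lambda>S. S \<rightarrow>\<^sub>E (UNIV :: bool set))"
    unfolding cs_eq by auto
  have f: "finite {S. S \<subseteq> {0..<n} \<and> card S = D \<and> Q S}" by (rule finite_subset[of _ "Pow {0..<n}"]) auto
  have "card {C \<in> clause_space n D. Q (fst C)} = card (Sigma {S. S \<subseteq> {0..<n} \<and> card S = D \<and> Q S} (\<lambda>S. S \<rightarrow>\<^sub>E (UNIV :: bool set)))"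
    by (simp only: e)
  also have "\<dots> = (\<Sum>S\<in>{S. S \<subseteq> {0..<n} \<and> card S = D \<and> Q S}. card (S \<rightarrow>\<^sub>E (UNIV :: bool set)))"
    using f by (intro card_SigmaI) (auto intro: finite_funs)
  also have "\<dots> = (\<Sum>S\<in>{S. S \<subseteq> {0..<n} \<and> card S = D \<and> Q S}. 2 ^ D)"
  proof (intro sum.cong refl)
    fix S assume "S \<in> {S. S \<subseteq> {0..<n} \<and> card S = D \<and> Q S}"
    then have h: "S \<subseteq> {0..<n}" "card S = D" by auto
    then have "finite S" by (intro finite_subset[OF h(1)]) simp
    then have "card (S \<rightarrow>\<^sub>E (UNIV :: bool set)) = 2 ^ card S" by (rule card_funs)
    then show "card (S \<rightarrow>\<^sub>E (UNIV :: bool set)) = 2 ^ D" using h(2) by (simp only:)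
  qed
  also have "\<dots> = card {S. S \<subseteq> {0..<n} \<and> card S = D \<and> Q S} * 2 ^ D"
    by (simp only: sum_constant) simp
  finally show ?thesis .
qed

lemma card_cs: "card (clause_space n D) = (n choose D) * 2 ^ D"
proof -
  have "card (clause_space n D) = card {C \<in> clause_space n D. True}" by simp
  also have "\<dots> = card {S. S \<subseteq> {0..<n} \<and> card S = D \<and> True} * 2 ^ D" by (rule card_cs_pred)
  finally show ?thesis by (simp add: n_subsets)
qed

lemma finite_cs: "finite (clause_space n D)"
  unfolding cs_eq by (rule finite_SigmaI) (auto intro: finite_subset[of _ "Pow {0..<n}"] finite_funs)

lemma cs_nonempty: "D \<le> n \<Longrightarrow> clause_space n D \<noteq> {}"
  using card_cs[of n D] by (auto simp: card_eq_0_iff)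

lemma card_supsets:
  assumes "K \<subseteq> {0..<n}" "card K = k"
  shows "card {S. S \<subseteq> {0..<n} \<and> card S = D \<and> K \<subseteq> S} \<le> (n - k) choose (D - k)"
proof -
  have fK: "finite K" by (rule finite_subset[OF assms(1)]) simp
  have inj: "inj_on (\<lambda>S. S - K) {S. S \<subseteq> {0..<n} \<and> card S = D \<and> K \<subseteq> S}"
    by (rule inj_onI) blast
  have img: "(\<lambda>S. S - K) ` {S. S \<subseteq> {0..<n} \<and> card S = D \<and> K \<subseteq> S} \<subseteq> {Y. Y \<subseteq> {0..<n} - K \<and> card Y = D - k}"
  proof (rule image_subsetI)
    fix S assume "S \<in> {S. S \<subseteq> {0..<n} \<and> card S = D \<and> K \<subseteq> S}"
    then have h: "S \<subseteq> {0..<n}" "card S = D" "K \<subseteq> S" by auto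
    then have "card (S - K) = D - k" using fK assms(2) by (simp add: card_Diff_subset)
    then show "S - K \<in> {Y. Y \<subseteq> {0..<n} - K \<and> card Y = D - k}" using h(1) by blast
  qed
  have fin: "finite {Y. Y \<subseteq> {0..<n} - K \<and> card Y = D - k}"
    by (rule finite_subset[of _ "Pow ({0..<n} - K)"]) auto
  have "card {S. S \<subseteq> {0..<n} \<and> card S = D \<and> K \<subseteq> S} \<le> card {Y. Y \<subseteq> {0..<n} - K \<and> card Y = D - k}"
    by (rule card_inj_on_le[OF inj img fin])
  also have "\<dots> = (n - k) choose (D - k)"
    using assms fK by (simp add: n_subsets card_Diff_subset)
  finally show ?thesis .
qed

lemma fin_sets: "finite {S. S \<subseteq> {0..<n::nat} \<and> P S}"
  by (rule finite_subset[of _ "Pow {0..<n}"]) auto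

lemma card_hit:
  assumes "T \<subseteq> {0..<n}" "card T = t"
  shows "card {S. S \<subseteq> {0..<n} \<and> card S = D \<and> k \<le> card (S \<inter> T)} \<le> (t choose k) * ((n - k) choose (D - k))"
proof -
  have fT: "finite T" by (rule finite_subset[OF assms(1)]) simp
  let ?K = "{K. K \<subseteq> T \<and> card K = k}"
  have sub: "{S. S \<subseteq> {0..<n} \<and> card S = D \<and> k \<le> card (S \<inter> T)} \<subseteq> (\<Union>K\<in>?K. {S. S \<subseteq> {0..<n} \<and> card S = D \<and> K \<subseteq> S})"
  proof
    fix S assume "S \<in> {S. S \<subseteq> {0..<n} \<and> card S = D \<and> k \<le> card (S \<inter> T)}"
    then have h: "S \<subseteq> {0..<n}" "card S = D" "k \<le> card (S \<inter> T)" by auto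
    obtain K where "K \<subseteq> S \<inter> T" "card K = k" using obtain_subset_with_card_n[OF h(3)] by blast
    then show "S \<in> (\<Union>K\<in>?K. {S. S \<subseteq> {0..<n} \<and> card S = D \<and> K \<subseteq> S})" using h by auto
  qed
  have fK: "finite ?K" by (rule finite_subset[of _ "Pow T"]) (use fT in auto)
  have "card {S. S \<subseteq> {0..<n} \<and> card S = D \<and> k \<le> card (S \<inter> T)}
      \<le> card (\<Union>K\<in>?K. {S. S \<subseteq> {0..<n} \<and> card S = D \<and> K \<subseteq> S})"
    by (intro card_mono sub finite_UN_I fK fin_sets)
  also have "\<dots> \<le> (\<Sum>K\<in>?K. card {S. S \<subseteq> {0..<n} \<and> card S = D \<and> K \<subseteq> S})"
    by (rule card_UN_le[OF fK])
  also have "\<dots> \<le> (\<Sum>K\<in>?K. (n - k) choose (D - k))"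
    using assms by (intro sum_mono card_supsets) auto
  also have "\<dots> = (t choose k) * ((n - k) choose (D - k))"
    using fT assms by (simp add: n_subsets)
  finally show ?thesis .
qed

lemma hit_ratio:
  assumes "T \<subseteq> {0..<n}" "card T = t" "k \<le> D" "D \<le> n" "0 < n"
  shows "real (card {C \<in> clause_space n D. k \<le> card (fst C \<inter> T)}) / real (card (clause_space n D))
         \<le> 2 ^ D * (real t / real n) ^ k"
proof -
  have tn: "t \<le> n" using assms card_mono[of "{0..<n}" T] by auto
  have kn: "k \<le> n" using assms by simp
  have pos: "0 < real (n choose k)" "0 < real (n choose D)" using kn assms by auto
  have "real (card {C \<in> clause_space n D. k \<le> card (fst C \<inter> T)}) / real (card (clause_space n D))
      = real (card {S. S \<subseteq> {0..<n} \<and> card S = D \<and> k \<le> card (S \<inter> T)}) / real (n choose D)"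
    unfolding card_cs_pred[of n D "\<lambda>S. k \<le> card (S \<inter> T)"] card_cs by simp
  also have "\<dots> \<le> real (t choose k) * real ((n - k) choose (D - k)) / real (n choose D)"
    using card_hit[OF assms(1,2), of D k] pos by (intro divide_right_mono) (simp_all flip: of_nat_mult)
  also have "\<dots> = real (t choose k) * real (D choose k) / real (n choose k)"
  proof -
    have "real (n choose D) * real (D choose k) = real (n choose k) * real ((n - k) choose (D - k))"
      using choose_mult[OF assms(3,4)] by (simp flip: of_nat_mult)
    then show ?thesis using pos by (simp add: field_simps)
  qed
  also have "\<dots> = real (D choose k) * (real (t choose k) / real (n choose k))" by simp
  also have "\<dots> \<le> real (D choose k) * (real t / real n) ^ k"
  proof (intro mult_left_mono)
    have "real (t choose k) * real n ^ k \<le> real (n choose k) * real t ^ k" by (rule choose_ratio_le[OF tn])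
    moreover have "0 < real n" using assms by simp
    ultimately show "real (t choose k) / real (n choose k) \<le> (real t / real n) ^ k"
      using pos by (simp add: field_simps power_divide)
  qed simp
  also have "\<dots> \<le> 2 ^ D * (real t / real n) ^ k"
  proof (intro mult_right_mono)
    have "D choose k \<le> 2 ^ D" by (rule binomial_le_pow2)
    then show "real (D choose k) \<le> 2 ^ D" by (metis numeral_power_le_of_nat_cancel_iff of_nat_le_iff of_nat_numeral of_nat_power)
  qed simp
  finally show ?thesis .
qed

lemma cnf_card: "card (cnf_space m n D) = card (clause_space n D) ^ m"
  unfolding cnf_space_def by (simp add: card_PiE finite_cs)

lemma finite_cnf: "finite (cnf_space m n D)"
  unfolding cnf_space_def by (intro finite_PiE finite_cs) simp

lemma cnf_restr_card:
  assumes "I \<subseteq> {0..<m}" "G \<subseteq> clause_space n D"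
  shows "card {\<phi> \<in> cnf_space m n D. \<forall>i\<in>I. \<phi> i \<in> G} = card G ^ card I * card (clause_space n D) ^ (m - card I)"
proof -
  have e: "{\<phi> \<in> cnf_space m n D. \<forall>i\<in>I. \<phi> i \<in> G} = PiE {0..<m} (\<lambda>i. if i \<in> I then G else clause_space n D)"
  proof (rule set_eqI)
    fix \<phi> :: cnf
    have l: "\<phi> \<in> {\<phi> \<in> cnf_space m n D. \<forall>i\<in>I. \<phi> i \<in> G} \<longleftrightarrow>
      (\<forall>i\<in>{0..<m}. \<phi> i \<in> clause_space n D) \<and> \<phi> \<in> extensional {0..<m} \<and> (\<forall>i\<in>I. \<phi> i \<in> G)"
      by (simp add: cnf_space_def PiE_iff)
    have r: "\<phi> \<in> PiE {0..<m} (\<lambda>i. if i \<in> I then G else clause_space n D) \<longleftrightarrow>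
      (\<forall>i\<in>{0..<m}. \<phi> i \<in> (if i \<in> I then G else clause_space n D)) \<and> \<phi> \<in> extensional {0..<m}"
      by (simp add: PiE_iff)
    show "\<phi> \<in> {\<phi> \<in> cnf_space m n D. \<forall>i\<in>I. \<phi> i \<in> G} \<longleftrightarrow> \<phi> \<in> PiE {0..<m} (\<lambda>i. if i \<in> I then G else clause_space n D)"
      unfolding l r using assms by (metis subsetD)
  qed
  have "card (PiE {0..<m} (\<lambda>i. if i \<in> I then G else clause_space n D))
     = (\<Prod>i\<in>{0..<m}. if i \<in> I then card G else card (clause_space n D))"
    by (simp add: card_PiE if_distrib)
  also have "\<dots> = card G ^ card I * card (clause_space n D) ^ (m - card I)"
  proof -
    have "{0..<m} \<inter> {i. i \<in> I} = I" "{0..<m} \<inter> - {i. i \<in> I} = {0..<m} - I" using assms by auto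
    moreover have "card ({0..<m} - I) = m - card I" using assms by (simp add: card_Diff_subset finite_subset)
    ultimately show ?thesis by (simp add: prod.If_cases)
  qed
  finally show ?thesis unfolding e .
qed



lemma card_avoid:
  fixes A K :: "nat set"
  assumes "finite A" "K \<subseteq> A"
  shows "card {x \<in> A \<rightarrow>\<^sub>E (UNIV :: bool set). \<forall>v\<in>K. x v \<noteq> s v} = 2 ^ (card A - card K)"
proof -
  have fK: "finite K" using assms finite_subset by blast
  have e: "{x \<in> A \<rightarrow>\<^sub>E (UNIV :: bool set). \<forall>v\<in>K. x v \<noteq> s v} = PiE A (\<lambda>v. if v \<in> K then {\<not> s v} else UNIV)"
  proof (rule set_eqI)
    fix x :: "nat \<Rightarrow> bool"
    have l: "x \<in> {x \<in> A \<rightarrow>\<^sub>E (UNIV :: bool set). \<forall>v\<in>K. x v \<noteq> s v} \<longleftrightarrow> x \<in> extensional A \<and> (\<forall>v\<in>K. x v \<noteq> s v)"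
      by (simp add: PiE_iff)
    have r: "x \<in> PiE A (\<lambda>v. if v \<in> K then {\<not> s v} else UNIV) \<longleftrightarrow> x \<in> extensional A \<and> (\<forall>v\<in>A. x v \<in> (if v \<in> K then {\<not> s v} else UNIV))"
      by (simp add: PiE_iff conj_commute)
    have m: "(\<forall>v\<in>A. x v \<in> (if v \<in> K then {\<not> s v} else UNIV)) \<longleftrightarrow> (\<forall>v\<in>K. x v \<noteq> s v)"
      using assms(2) by auto
    show "x \<in> {x \<in> A \<rightarrow>\<^sub>E (UNIV :: bool set). \<forall>v\<in>K. x v \<noteq> s v} \<longleftrightarrow> x \<in> PiE A (\<lambda>v. if v \<in> K then {\<not> s v} else UNIV)"
      unfolding l r m ..
  qed
  have "card (PiE A (\<lambda>v. if v \<in> K then {\<not> s v} else (UNIV :: bool set))) = (\<Prod>v\<in>A. card (if v \<in> K then {\<not> s v} else (UNIV :: bool set)))"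
    by (rule card_PiE[OF assms(1)])
  also have "\<dots> = (\<Prod>v\<in>A. if v \<in> K then 1 else 2)"
    by (intro prod.cong refl) auto
  also have "\<dots> = 2 ^ (card A - card K)"
  proof -
    have e1: "A \<inter> {v. v \<in> K} = K" "A \<inter> - {v. v \<in> K} = A - K" using assms by auto
    have e2: "card (A - K) = card A - card K" using assms fK by (simp add: card_Diff_subset)
    have "(\<Prod>v\<in>A. if v \<in> K then 1 else 2) = prod (\<lambda>_. 1) (A \<inter> {v. v \<in> K}) * prod (\<lambda>_. (2::nat)) (A \<inter> - {v. v \<in> K})"
      by (rule prod.If_cases[OF assms(1)])
    then show ?thesis unfolding e1 by (simp add: e2)
  qed
  finally show ?thesis unfolding e .
qed

lemma fixing_prob:
  fixes \<phi> :: cnf and A B :: "nat set" and E :: "nat set"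
  assumes fA: "finite A" and fE: "finite E"
    and big: "\<And>i. i \<in> E \<Longrightarrow> (1 - \<delta>) * real D < real (card (fst (\<phi> i) \<inter> A))"
    and cE: "real (card E) \<le> 2 powr (0.7 * real D)"
    and d: "\<delta> \<le> 1/10"
  shows "measure_pmf.prob (pmf_of_set (A \<rightarrow>\<^sub>E (UNIV :: bool set)))
           {x. \<forall>i \<in> E. clause_fixed (\<phi> i) A B x} \<ge> 1 - 2 powr (- (1/5) * real D)"
proof -
  let ?P = "A \<rightarrow>\<^sub>E (UNIV :: bool set)"
  define U where "U i = {x \<in> ?P. \<forall>v\<in>fst (\<phi> i) \<inter> A. x v \<noteq> snd (\<phi> i) v}" for i
  have fP: "finite ?P" using fA by (simp add: finite_PiE)
  have nP: "?P \<noteq> {}" by (simp add: PiE_eq_empty_iff)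
  have cP: "card ?P = 2 ^ card A" using fA by (simp add: card_PiE)
  have sub: "?P - (\<Union>i\<in>E. U i) \<subseteq> ?P \<inter> {x. \<forall>i \<in> E. clause_fixed (\<phi> i) A B x}"
  proof
    fix x assume x: "x \<in> ?P - (\<Union>i\<in>E. U i)"
    have "clause_fixed (\<phi> i) A B x" if i: "i \<in> E" for i
    proof -
      from x i obtain v where v: "v \<in> fst (\<phi> i) \<inter> A" "x v = snd (\<phi> i) v" unfolding U_def by auto
      show ?thesis unfolding clause_fixed_def clause_sat_def using v by auto
    qed
    then show "x \<in> ?P \<inter> {x. \<forall>i \<in> E. clause_fixed (\<phi> i) A B x}" using x by auto
  qed
  have cU: "real (card (U i)) / real (card ?P) \<le> 2 powr (- 0.9 * real D)" if i: "i \<in> E" for i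
  proof -
    have "card (U i) = 2 ^ (card A - card (fst (\<phi> i) \<inter> A))"
      unfolding U_def by (rule card_avoid[OF fA]) auto
    moreover have "card (fst (\<phi> i) \<inter> A) \<le> card A" using fA by (intro card_mono) auto
    ultimately have "real (card (U i)) / real (card ?P) = (2::real) ^ (card A - card (fst (\<phi> i) \<inter> A)) / 2 ^ card A"
      unfolding cP by simp
    also have "\<dots> = 1 / 2 ^ card (fst (\<phi> i) \<inter> A)"
      using \<open>card (fst (\<phi> i) \<inter> A) \<le> card A\<close> by (simp add: power_diff)
    also have "\<dots> = 2 powr (- real (card (fst (\<phi> i) \<inter> A)))"
      by (simp add: powr_minus_divide powr_realpow)
    also have "\<dots> \<le> 2 powr (- 0.9 * real D)"
    proof -
      have "0.9 * real D \<le> (1 - \<delta>) * real D" using d by (intro mult_right_mono) auto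
      then show ?thesis using big[OF i] by (intro powr_mono) auto
    qed
    finally show ?thesis .
  qed
  have "real (card ?P) - (\<Sum>i\<in>E. real (card (U i))) \<le> real (card (?P - (\<Union>i\<in>E. U i)))"
  proof -
    have "card (\<Union>i\<in>E. U i) \<le> (\<Sum>i\<in>E. card (U i))" by (rule card_UN_le[OF fE])
    moreover have "card (?P - (\<Union>i\<in>E. U i)) = card ?P - card (\<Union>i\<in>E. U i)"
      using fP by (intro card_Diff_subset) (auto simp: U_def intro: finite_subset)
    moreover have "card (\<Union>i\<in>E. U i) \<le> card ?P" using fP by (intro card_mono) (auto simp: U_def)
    ultimately show ?thesis by (simp add: of_nat_diff flip: of_nat_sum)
  qed
  also have "\<dots> \<le> real (card (?P \<inter> {x. \<forall>i \<in> E. clause_fixed (\<phi> i) A B x}))"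
    using fP sub by (intro of_nat_mono card_mono) auto
  finally have main: "real (card ?P) - (\<Sum>i\<in>E. real (card (U i))) \<le> real (card (?P \<inter> {x. \<forall>i \<in> E. clause_fixed (\<phi> i) A B x}))" .
  have pos: "0 < real (card ?P)" using fP nP by (simp add: card_gt_0_iff)
  have "(\<Sum>i\<in>E. real (card (U i))) / real (card ?P) = (\<Sum>i\<in>E. real (card (U i)) / real (card ?P))"
    by (simp add: sum_divide_distrib)
  also have "\<dots> \<le> (\<Sum>i\<in>E. 2 powr (- 0.9 * real D))" by (intro sum_mono cU)
  also have "\<dots> = real (card E) * 2 powr (- 0.9 * real D)" by simp
  also have "\<dots> \<le> 2 powr (0.7 * real D) * 2 powr (- 0.9 * real D)" by (intro mult_right_mono cE) auto
  also have "\<dots> = 2 powr (- (1/5) * real D)" by (simp add: powr_add[symmetric])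
  finally have s: "(\<Sum>i\<in>E. real (card (U i))) / real (card ?P) \<le> 2 powr (- (1/5) * real D)" .
  have "1 - 2 powr (- (1/5) * real D) \<le> 1 - (\<Sum>i\<in>E. real (card (U i))) / real (card ?P)" using s by simp
  also have "\<dots> = (real (card ?P) - (\<Sum>i\<in>E. real (card (U i)))) / real (card ?P)" using pos by (simp add: field_simps)
  also have "\<dots> \<le> real (card (?P \<inter> {x. \<forall>i \<in> E. clause_fixed (\<phi> i) A B x})) / real (card ?P)"
    using main pos by (intro divide_right_mono) auto
  also have "\<dots> = measure_pmf.prob (pmf_of_set ?P) {x. \<forall>i \<in> E. clause_fixed (\<phi> i) A B x}"
    using fP nP by (simp add: measure_pmf_of_set)
  finally show ?thesis .
qed



definition exp_bad :: "real \<Rightarrow> real \<Rightarrow> nat \<Rightarrow> nat \<Rightarrow> nat \<Rightarrow> cnf \<Rightarrow> bool" where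
  "exp_bad \<delta> \<rho> m n D \<phi> \<longleftrightarrow> (\<exists>s I T. 1 \<le> s \<and> real s \<le> \<rho> * real n / real D \<and> I \<subseteq> {0..<m} \<and> card I = s \<and>
      T \<subseteq> {0..<n} \<and> card T = nat \<lfloor>\<delta> * real D * real s / 2\<rfloor> \<and>
      (\<forall>i\<in>I. nat \<lceil>\<delta> * real D\<rceil> \<le> card (fst (\<phi> i) \<inter> T)))"

lemma extend_set:
  assumes "finite U" "N \<subseteq> U" "card N \<le> t" "t \<le> card U"
  shows "\<exists>T. N \<subseteq> T \<and> T \<subseteq> U \<and> card T = t"
proof -
  have fN: "finite N" using assms finite_subset by blast
  have "t - card N \<le> card (U - N)" using assms fN by (simp add: card_Diff_subset)
  then obtain R where R: "R \<subseteq> U - N" "card R = t - card N" using obtain_subset_with_card_n by metis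
  have fR: "finite R" using R assms finite_subset by (meson finite_Diff)
  have "card (N \<union> R) = card N + card R" using R fN fR by (intro card_Un_disjoint) auto
  then have "card (N \<union> R) = t" using R assms by simp
  then show ?thesis using R assms by (intro exI[of _ "N \<union> R"]) auto
qed

lemma cnf_clause:
  assumes "\<phi> \<in> cnf_space m n D" "i < m"
  shows "fst (\<phi> i) \<subseteq> {0..<n}" "card (fst (\<phi> i)) = D" "finite (fst (\<phi> i))"
proof -
  have "\<phi> i \<in> clause_space n D" using assms unfolding cnf_space_def by auto
  then obtain S s where "\<phi> i = (S, s)" "S \<subseteq> {0..<n}" "card S = D" unfolding clause_space_def by auto
  then show "fst (\<phi> i) \<subseteq> {0..<n}" "card (fst (\<phi> i)) = D" "finite (fst (\<phi> i))"
    using finite_subset[of S "{0..<n}"] by auto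
qed

lemma expander_det:
  assumes \<phi>: "\<phi> \<in> cnf_space m n D" and A: "A \<subseteq> {0..<n}" and L: "L \<subseteq> {0..<m}"
    and deg: "\<forall>i\<in>L. \<delta> * real D \<le> real (card (fst (\<phi> i) \<inter> A))"
    and nb: "\<not> exp_bad \<delta> \<rho> m n D \<phi>"
    and d0: "0 < \<delta>" and d1: "\<delta> \<le> 1/10" and r0: "0 < \<rho>" and r1: "\<rho> \<le> 1" and D0: "0 < D"
  shows "bip_expander L (\<lambda>i. fst (\<phi> i) \<inter> A) (\<rho> * real n / real D) D (\<delta> * real D / 2)"
  unfolding bip_expander_def
proof (intro conjI ballI allI impI)
  fix i assume i: "i \<in> L"
  then have im: "i < m" using L by auto
  show "card (fst (\<phi> i) \<inter> A) \<le> D"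
    using cnf_clause[OF \<phi> im] card_mono[of "fst (\<phi> i)" "fst (\<phi> i) \<inter> A"] by auto
next
  fix S assume S: "S \<subseteq> L \<and> real (card S) \<le> \<rho> * real n / real D"
  let ?N = "\<Union>i\<in>S. fst (\<phi> i) \<inter> A"
  show "\<delta> * real D / 2 * real (card S) \<le> real (card ?N)"
  proof (rule ccontr)
    assume contra: "\<not> ?thesis"
    define s where "s = card S"
    define t where "t = nat \<lfloor>\<delta> * real D * real s / 2\<rfloor>"
    have fS: "finite S" using S L finite_subset[of S "{0..<m}"] by auto
    have s1: "1 \<le> s"
    proof (rule ccontr)
      assume "\<not> 1 \<le> s"
      then have "card S = 0" using s_def by simp
      then have "S = {}" using fS by simp
      then show False using contra by simp
    qed
    have NA: "?N \<subseteq> A" by auto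
    have fN: "finite ?N" using A NA finite_subset[of ?N "{0..<n}"] by auto
    have "real (card ?N) < \<delta> * real D * real s / 2" using contra s_def by (simp add: mult_ac)
    then have "int (card ?N) \<le> \<lfloor>\<delta> * real D * real s / 2\<rfloor>" by (simp add: le_floor_iff)
    then have cN: "card ?N \<le> t" unfolding t_def by linarith
    have "real t \<le> \<delta> * real D * real s / 2"
    proof -
      have "0 \<le> \<delta> * real D * real s / 2" using d0 by simp
      then show ?thesis unfolding t_def by linarith
    qed
    also have "\<dots> \<le> \<delta> * real D * (\<rho> * real n / real D) / 2"
      using S s_def d0 by (intro divide_right_mono mult_left_mono) auto
    also have "\<dots> = \<delta> * \<rho> * real n / 2" using D0 by simp
    also have "\<dots> \<le> real n"
    proof -
      have "\<delta> * \<rho> \<le> 1 * 1" using d0 d1 r0 r1 by (intro mult_mono) auto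
      then have "\<delta> * \<rho> * real n \<le> 1 * real n" by (intro mult_right_mono) auto
      then show ?thesis by simp
    qed
    finally have tn: "t \<le> n" by simp
    obtain T where T: "?N \<subseteq> T" "T \<subseteq> {0..<n}" "card T = t"
      using extend_set[of "{0..<n}" ?N t] A NA cN tn by auto
    have hit: "nat \<lceil>\<delta> * real D\<rceil> \<le> card (fst (\<phi> i) \<inter> T)" if i: "i \<in> S" for i
    proof -
      have im: "i < m" using i S L by auto
      have "fst (\<phi> i) \<inter> A \<subseteq> fst (\<phi> i) \<inter> T" using T(1) i by auto
      then have "card (fst (\<phi> i) \<inter> A) \<le> card (fst (\<phi> i) \<inter> T)"
        using cnf_clause[OF \<phi> im] by (intro card_mono) auto
      moreover have "\<delta> * real D \<le> real (card (fst (\<phi> i) \<inter> A))" using deg i S by auto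
      ultimately have "\<delta> * real D \<le> real (card (fst (\<phi> i) \<inter> T))" by linarith
      then have "\<lceil>\<delta> * real D\<rceil> \<le> int (card (fst (\<phi> i) \<inter> T))" by (simp add: ceiling_le_iff)
      then show ?thesis by linarith
    qed
    have "exp_bad \<delta> \<rho> m n D \<phi>"
      unfolding exp_bad_def
      using s1 S s_def L T hit t_def by (intro exI[of _ s] exI[of _ S] exI[of _ T]) auto
    then show False using nb by simp
  qed
qed



lemma card_split:
  assumes "finite C" "C \<subseteq> U"
  shows "card (C \<inter> X) + card (C \<inter> (U - X)) = card C"
proof -
  have "C = (C \<inter> X) \<union> (C \<inter> (U - X))" using assms by auto
  moreover have "card ((C \<inter> X) \<union> (C \<inter> (U - X))) = card (C \<inter> X) + card (C \<inter> (U - X))"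
    using assms by (intro card_Un_disjoint) auto
  ultimately show ?thesis by simp
qed

lemma good_det:
  assumes \<phi>: "\<phi> \<in> cnf_space m n D" and X: "X \<subseteq> {0..<n}"
    and d0: "0 < \<delta>" and d1: "\<delta> \<le> 1/10" and r0: "0 < \<rho>" and r1: "\<rho> \<le> 1" and D0: "0 < D"
    and cnt: "real (card {i \<in> {0..<m}. (1-\<delta>) * real D < real (card (fst (\<phi> i) \<inter> X)) \<or>
                 (1-\<delta>) * real D < real (card (fst (\<phi> i) \<inter> ({0..<n} - X)))}) \<le> 2 powr (0.7 * real D)"
    and nb: "\<not> exp_bad \<delta> \<rho> m n D \<phi>"
  shows "good_partition \<delta> (1/5) \<rho> m n D \<phi> X ({0..<n} - X)"
proof -
  define EA where "EA = error_set \<delta> m D \<phi> X"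
  define EB where "EB = error_set \<delta> m D \<phi> ({0..<n} - X)"
  define Bad where "Bad = {i \<in> {0..<m}. (1-\<delta>) * real D < real (card (fst (\<phi> i) \<inter> X)) \<or>
                 (1-\<delta>) * real D < real (card (fst (\<phi> i) \<inter> ({0..<n} - X)))}"
  have fBad: "finite Bad" unfolding Bad_def by auto
  have EAB: "EA \<subseteq> Bad" "EB \<subseteq> Bad" unfolding EA_def EB_def Bad_def error_set_def by auto
  have cA: "real (card EA) \<le> 2 powr (0.7 * real D)"
    using card_mono[OF fBad EAB(1)] cnt unfolding Bad_def by linarith
  have cB: "real (card EB) \<le> 2 powr (0.7 * real D)"
    using card_mono[OF fBad EAB(2)] cnt unfolding Bad_def by linarith
  have fX: "finite X" using X finite_subset by blast
  have sp: "card (fst (\<phi> i) \<inter> X) + card (fst (\<phi> i) \<inter> ({0..<n} - X)) = D" if "i < m" for i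
    using card_split[of "fst (\<phi> i)" "{0..<n}" X] cnf_clause[OF \<phi> that] by simp
  have c1: "measure_pmf.prob (pmf_of_set (X \<rightarrow>\<^sub>E (UNIV :: bool set)))
         {x. \<forall>i \<in> EA. clause_fixed (\<phi> i) X ({0..<n} - X) x} \<ge> 1 - 2 powr (- (1/5) * real D)"
    by (rule fixing_prob[OF fX _ _ cA d1]) (auto simp: EA_def error_set_def)
  have c2: "measure_pmf.prob (pmf_of_set (({0..<n} - X) \<rightarrow>\<^sub>E (UNIV :: bool set)))
         {y. \<forall>i \<in> EB. clause_fixed (\<phi> i) ({0..<n} - X) X y} \<ge> 1 - 2 powr (- (1/5) * real D)"
    by (rule fixing_prob[OF _ _ _ cB d1]) (auto simp: EB_def error_set_def)
  have c3: "bip_expander ({0..<m} - EA - EB) (\<lambda>i. fst (\<phi> i) \<inter> X) (\<rho> * real n / real D) D (\<delta> * real D / 2)"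
  proof (rule expander_det[OF \<phi> X _ _ nb d0 d1 r0 r1 D0])
    show "\<forall>i\<in>{0..<m} - EA - EB. \<delta> * real D \<le> real (card (fst (\<phi> i) \<inter> X))"
    proof
      fix i assume i: "i \<in> {0..<m} - EA - EB"
      then have "\<not> (1-\<delta>) * real D < real (card (fst (\<phi> i) \<inter> ({0..<n} - X)))"
        unfolding EB_def error_set_def by auto
      moreover have "real (card (fst (\<phi> i) \<inter> X)) + real (card (fst (\<phi> i) \<inter> ({0..<n} - X))) = real D"
        using sp[of i] i by (simp flip: of_nat_add)
      ultimately show "\<delta> * real D \<le> real (card (fst (\<phi> i) \<inter> X))" by (simp add: algebra_simps)
    qed
  qed auto
  have c4: "bip_expander ({0..<m} - EA - EB) (\<lambda>i. fst (\<phi> i) \<inter> ({0..<n} - X)) (\<rho> * real n / real D) D (\<delta> * real D / 2)"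
  proof (rule expander_det[OF \<phi> _ _ _ nb d0 d1 r0 r1 D0])
    show "\<forall>i\<in>{0..<m} - EA - EB. \<delta> * real D \<le> real (card (fst (\<phi> i) \<inter> ({0..<n} - X)))"
    proof
      fix i assume i: "i \<in> {0..<m} - EA - EB"
      then have "\<not> (1-\<delta>) * real D < real (card (fst (\<phi> i) \<inter> X))"
        unfolding EA_def error_set_def by auto
      moreover have "real (card (fst (\<phi> i) \<inter> X)) + real (card (fst (\<phi> i) \<inter> ({0..<n} - X))) = real D"
        using sp[of i] i by (simp flip: of_nat_add)
      ultimately show "\<delta> * real D \<le> real (card (fst (\<phi> i) \<inter> ({0..<n} - X)))" by (simp add: algebra_simps)
    qed
  qed auto
  show ?thesis
    unfolding good_partition_def Let_def EA_def[symmetric] EB_def[symmetric]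
    using c1 c2 c3 c4 by simp
qed



lemma card_split':
  assumes "finite C" "C \<subseteq> U"
  shows "card (C \<inter> X) + card (C \<inter> (U - X)) = card C"
proof -
  have "C = (C \<inter> X) \<union> (C \<inter> (U - X))" using assms by auto
  moreover have "card ((C \<inter> X) \<union> (C \<inter> (U - X))) = card (C \<inter> X) + card (C \<inter> (U - X))"
    using assms by (intro card_Un_disjoint) auto
  ultimately show ?thesis by simp
qed

lemma per_clause_count:
  assumes S: "S \<subseteq> {0..<n}" "card S = D" and d0: "0 < \<delta>" and d1: "\<delta> \<le> 1/10"
  shows "real (card {X \<in> Pow {0..<n}. (1-\<delta>) * real D < real (card (S \<inter> X)) \<or>
                 (1-\<delta>) * real D < real (card (S \<inter> ({0..<n} - X)))}) \<le> 2 ^ n * 2 * 2 powr (-0.4 * real D)"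
proof -
  define P where "P j \<longleftrightarrow> (1-\<delta>) * real D < real j \<or> (1-\<delta>) * real D < real D - real j" for j
  have fS: "finite S" using S finite_subset by blast
  have e: "{X \<in> Pow {0..<n}. (1-\<delta>) * real D < real (card (S \<inter> X)) \<or>
                 (1-\<delta>) * real D < real (card (S \<inter> ({0..<n} - X)))} = {X \<in> Pow {0..<n}. P (card (S \<inter> X))}"
  proof (intro Collect_cong conj_cong refl)
    fix X
    have "card (S \<inter> X) + card (S \<inter> ({0..<n} - X)) = D" using card_split'[OF fS S(1)] S(2) by simp
    then have "real (card (S \<inter> ({0..<n} - X))) = real D - real (card (S \<inter> X))" by (simp flip: of_nat_add)
    then show "((1-\<delta>) * real D < real (card (S \<inter> X)) \<or>
                 (1-\<delta>) * real D < real (card (S \<inter> ({0..<n} - X)))) = P (card (S \<inter> X))"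
      unfolding P_def by simp
  qed
  have Dn: "D \<le> n" using card_mono[OF _ S(1)] S(2) by simp
  have "card {X \<in> Pow {0..<n}. P (card (S \<inter> X))} = (\<Sum>j\<in>{j. j \<le> D \<and> P j}. (D choose j) * 2 ^ (n - D))"
    using card_inter_pred[of "{0..<n}" S P] S by simp
  also have "\<dots> = (\<Sum>j\<in>{j. j \<le> D \<and> P j}. D choose j) * 2 ^ (n - D)" by (simp add: sum_distrib_right)
  finally have "real (card {X \<in> Pow {0..<n}. P (card (S \<inter> X))}) = real (\<Sum>j\<in>{j. j \<le> D \<and> P j}. D choose j) * 2 ^ (n - D)"
    by simp
  also have "\<dots> \<le> (2 * 2 powr (0.6 * real D)) * 2 ^ (n - D)"
    using tail_sum[OF d0 d1, of D] unfolding P_def by (intro mult_right_mono) auto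
  also have "\<dots> = 2 ^ n * 2 * 2 powr (-0.4 * real D)"
  proof -
    have "(2::real) ^ (n - D) = 2 ^ n / 2 ^ D" using Dn by (simp add: power_diff)
    also have "\<dots> = 2 ^ n * 2 powr (- real D)" by (simp add: powr_minus_divide powr_realpow divide_inverse powr_minus)
    finally have "(2 * 2 powr (0.6 * real D)) * (2::real) ^ (n - D) = 2 ^ n * 2 * (2 powr (0.6 * real D) * 2 powr (- real D))"
      by simp
    also have "2 powr (0.6 * real D) * 2 powr (- real D) = 2 powr (-0.4 * real D)"
      by (simp add: powr_add[symmetric])
    finally show ?thesis .
  qed
  finally show ?thesis unfolding e .
qed

lemma markov_count:
  fixes \<Omega> :: "'a set" and Q :: "'a \<Rightarrow> nat \<Rightarrow> bool" and K :: real
  assumes f: "finite \<Omega>" and K: "0 < K"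
  shows "real (card {\<omega> \<in> \<Omega>. K < real (card {i \<in> {0..<m}. Q \<omega> i})})
         \<le> (\<Sum>i<m. real (card {\<omega> \<in> \<Omega>. Q \<omega> i})) / K"
proof -
  let ?B = "{\<omega> \<in> \<Omega>. K < real (card {i \<in> {0..<m}. Q \<omega> i})}"
  have "K * real (card ?B) = (\<Sum>\<omega>\<in>?B. K)" by simp
  also have "\<dots> \<le> (\<Sum>\<omega>\<in>?B. real (card {i \<in> {0..<m}. Q \<omega> i}))"
    by (intro sum_mono) auto
  also have "\<dots> \<le> (\<Sum>\<omega>\<in>\<Omega>. real (card {i \<in> {0..<m}. Q \<omega> i}))"
    using f by (intro sum_mono2) auto
  also have "\<dots> = (\<Sum>\<omega>\<in>\<Omega>. \<Sum>i\<in>{0..<m}. of_bool (Q \<omega> i))"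
  proof (intro sum.cong refl)
    fix \<omega>
    have "{0..<m} \<inter> Collect (Q \<omega>) = {i \<in> {0..<m}. Q \<omega> i}" by auto
    then show "real (card {i \<in> {0..<m}. Q \<omega> i}) = (\<Sum>i\<in>{0..<m}. of_bool (Q \<omega> i))"
      by (subst sum_of_bool_eq) simp_all
  qed
  also have "\<dots> = (\<Sum>i\<in>{0..<m}. \<Sum>\<omega>\<in>\<Omega>. of_bool (Q \<omega> i))" by (rule sum.swap)
  also have "\<dots> = (\<Sum>i<m. real (card {\<omega> \<in> \<Omega>. Q \<omega> i}))"
  proof -
    have "(\<Sum>\<omega>\<in>\<Omega>. of_bool (Q \<omega> i)) = real (card {\<omega> \<in> \<Omega>. Q \<omega> i})" for i
    proof -
      have "\<Omega> \<inter> {\<omega>. Q \<omega> i} = {\<omega> \<in> \<Omega>. Q \<omega> i}" by auto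
      then show ?thesis using f by (subst sum_of_bool_eq) simp_all
    qed
    then show ?thesis by (simp add: atLeast0LessThan)
  qed
  finally show ?thesis using K by (simp add: field_simps)
qed

lemma term_bound:
  fixes n t k s D :: nat and \<delta> \<rho> :: real
  assumes n0: "0 < n" and tn: "real t \<le> \<rho> * real n" and er: "exp 1 * \<rho> \<le> 1" and r0: "0 < \<rho>"
    and k: "\<delta> * real D \<le> real k" and t: "real t \<le> \<delta> * real D * real s / 2" and d0: "0 < \<delta>"
  shows "real (n choose t) * (real t / real n) ^ (k * s) \<le> (exp 1 * \<rho>) powr (\<delta> * real D * real s / 2)"
proof -
  have ks: "\<delta> * real D * real s \<le> real (k * s)" using k by (simp add: mult_right_mono)
  have t2: "2 * t \<le> k * s" using ks t by linarith
  define x where "x = real t / real n"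
  have x0: "0 \<le> x" unfolding x_def by simp
  have x1: "x \<le> \<rho>" unfolding x_def using tn n0 by (simp add: field_simps)
  have "real (n choose t) * fact t \<le> real n ^ t"
    using binomial_fact_pow[of n t] by (metis of_nat_fact of_nat_le_iff of_nat_mult of_nat_power)
  then have c: "real (n choose t) \<le> real n ^ t / fact t" by (simp add: field_simps)
  have "real (n choose t) * x ^ (k * s) = real (n choose t) * x ^ t * x ^ (k * s - t)"
    using t2 by (simp add: power_add[symmetric])
  also have "\<dots> \<le> (real n ^ t / fact t) * x ^ t * x ^ (k * s - t)"
    using c x0 by (intro mult_right_mono) auto
  also have "\<dots> = (real t ^ t / fact t) * x ^ (k * s - t)"
    unfolding x_def using n0 by (simp add: power_divide)
  also have "\<dots> \<le> exp (real t) * x ^ (k * s - t)"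
    using pow_div_fact_le_exp[of "real t" t] x0 by (intro mult_right_mono) auto
  also have "\<dots> \<le> exp (real (k * s - t)) * x ^ (k * s - t)"
  proof -
    have "real (2 * t) \<le> real (k * s)" using t2 by (rule of_nat_mono)
    then have "real t \<le> real (k * s - t)" using t2 by (simp add: of_nat_diff)
    then have "exp (real t) \<le> exp (real (k * s - t))" by (simp only: exp_le_cancel_iff)
    then show ?thesis by (rule mult_right_mono[OF _ zero_le_power[OF x0]])
  qed
  also have "\<dots> = (exp 1 * x) ^ (k * s - t)"
    by (simp add: power_mult_distrib exp_of_nat_mult[symmetric])
  also have "\<dots> \<le> (exp 1 * \<rho>) ^ (k * s - t)"
    using x0 x1 by (intro power_mono mult_left_mono) auto
  also have "\<dots> = (exp 1 * \<rho>) powr real (k * s - t)"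
    using r0 by (simp add: powr_realpow)
  also have "\<dots> \<le> (exp 1 * \<rho>) powr (\<delta> * real D * real s / 2)"
  proof (rule powr_mono')
    show "\<delta> * real D * real s / 2 \<le> real (k * s - t)" using ks t t2 by (simp add: of_nat_diff)
  qed (use er r0 in auto)
  finally show ?thesis unfolding x_def .
qed



lemma nat_floor_le_real: "0 \<le> x \<Longrightarrow> real (nat \<lfloor>x\<rfloor>) \<le> x"
proof -
  assume x: "0 \<le> x"
  then have "0 \<le> \<lfloor>x\<rfloor>" by simp
  then have "real (nat \<lfloor>x\<rfloor>) = real_of_int \<lfloor>x\<rfloor>" by simp
  then show ?thesis using of_int_floor_le[of x] by linarith
qed

lemma exp_bad_count:
  fixes m n D :: nat and \<delta> \<rho> :: real
  assumes Dn: "D \<le> n" and n0: "0 < n" and D0: "0 < D" and d0: "0 < \<delta>" and d1: "\<delta> \<le> 1/10"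
    and r0: "0 < \<rho>" and r1: "\<rho> \<le> 1" and er: "exp 1 * \<rho> \<le> 1"
  shows "real (card {\<phi> \<in> cnf_space m n D. exp_bad \<delta> \<rho> m n D \<phi>}) / real (card (cnf_space m n D))
    \<le> (\<Sum>s\<in>{1..nat \<lfloor>\<rho> * real n / real D\<rfloor>}. real (m choose s) * 2 ^ (D * s) * (exp 1 * \<rho>) powr (\<delta> * real D * real s / 2))"
proof -
  define R where "R = nat \<lfloor>\<rho> * real n / real D\<rfloor>"
  define k where "k = nat \<lceil>\<delta> * real D\<rceil>"
  define tt where "tt s = nat \<lfloor>\<delta> * real D * real s / 2\<rfloor>" for s :: nat
  define CS where "CS = clause_space n D"
  define G where "G T = {C \<in> CS. k \<le> card (fst C \<inter> T)}" for T
  define Is where "Is s = {I. I \<subseteq> {0..<m} \<and> card I = s}" for s :: nat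
  define Ts where "Ts s = {T. T \<subseteq> {0..<n} \<and> card T = tt s}" for s :: nat
  define Ev where "Ev I T = {\<phi> \<in> cnf_space m n D. \<forall>i\<in>I. \<phi> i \<in> G T}" for I T
  have fIs: "finite (Is s)" for s unfolding Is_def by (rule finite_subset[of _ "Pow {0..<m}"]) auto
  have fTs: "finite (Ts s)" for s unfolding Ts_def by (rule finite_subset[of _ "Pow {0..<n}"]) auto
  have fCNF: "finite (cnf_space m n D)" by (rule finite_cnf)
  have fEv: "finite (Ev I T)" for I T unfolding Ev_def using fCNF by simp
  have cCS: "0 < card CS" unfolding CS_def using finite_cs cs_nonempty[OF Dn] by (simp add: card_gt_0_iff)
  have kD: "k \<le> D"
  proof -
    have "\<delta> * real D \<le> 1 * real D" using d1 by (intro mult_right_mono) auto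
    then have "\<lceil>\<delta> * real D\<rceil> \<le> int D" by (simp add: ceiling_le_iff)
    then show ?thesis unfolding k_def by linarith
  qed
  have kk: "\<delta> * real D \<le> real k" unfolding k_def by linarith
  have sR: "s \<le> R" if "real s \<le> \<rho> * real n / real D" for s
    unfolding R_def using that by (simp add: le_nat_floor)
  have tts: "real (tt s) \<le> \<delta> * real D * real s / 2" for s
  proof -
    have "0 \<le> \<delta> * real D * real s / 2" using d0 by simp
    then show ?thesis unfolding tt_def by linarith
  qed
  have ttn: "real (tt s) \<le> \<rho> * real n" if "s \<le> R" for s
  proof -
    have "real s \<le> real R" using that by simp
    also have "\<dots> \<le> \<rho> * real n / real D" unfolding R_def using r0 by (intro nat_floor_le_real) simp
    finally have "real s \<le> \<rho> * real n / real D" .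
    then have "real s * real D \<le> \<rho> * real n" using D0 by (simp add: field_simps)
    then have "\<delta> * (real s * real D) \<le> 1 * (\<rho> * real n)"
      using d0 d1 r0 mult_mono[of \<delta> 1 "real s * real D" "\<rho> * real n"] by auto
    then show ?thesis using tts[of s] by (simp add: mult_ac)
  qed
  have sub: "{\<phi> \<in> cnf_space m n D. exp_bad \<delta> \<rho> m n D \<phi>} \<subseteq> (\<Union>s\<in>{1..R}. \<Union>I\<in>Is s. \<Union>T\<in>Ts s. Ev I T)"
  proof
    fix \<phi> assume "\<phi> \<in> {\<phi> \<in> cnf_space m n D. exp_bad \<delta> \<rho> m n D \<phi>}"
    then have \<phi>: "\<phi> \<in> cnf_space m n D" and "exp_bad \<delta> \<rho> m n D \<phi>" by auto
    then obtain s I T where h: "1 \<le> s" "real s \<le> \<rho> * real n / real D" "I \<subseteq> {0..<m}" "card I = s"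
      "T \<subseteq> {0..<n}" "card T = tt s" "\<forall>i\<in>I. k \<le> card (fst (\<phi> i) \<inter> T)"
      unfolding exp_bad_def tt_def k_def by blast
    have "\<forall>i\<in>I. \<phi> i \<in> G T"
    proof
      fix i assume i: "i \<in> I"
      then have "\<phi> i \<in> CS" using \<phi> h(3) unfolding cnf_space_def CS_def by auto
      then show "\<phi> i \<in> G T" using h(7) i unfolding G_def by auto
    qed
    then have "\<phi> \<in> Ev I T" unfolding Ev_def using \<phi> by auto
    moreover have "s \<in> {1..R}" using h(1) sR[OF h(2)] by auto
    ultimately show "\<phi> \<in> (\<Union>s\<in>{1..R}. \<Union>I\<in>Is s. \<Union>T\<in>Ts s. Ev I T)"
      using h unfolding Is_def Ts_def by blast
  qed
  have "card {\<phi> \<in> cnf_space m n D. exp_bad \<delta> \<rho> m n D \<phi>} \<le> card (\<Union>s\<in>{1..R}. \<Union>I\<in>Is s. \<Union>T\<in>Ts s. Ev I T)"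
    by (intro card_mono sub finite_UN_I fIs fTs fEv) simp
  also have "\<dots> \<le> (\<Sum>s\<in>{1..R}. card (\<Union>I\<in>Is s. \<Union>T\<in>Ts s. Ev I T))" by (rule card_UN_le) simp
  also have "\<dots> \<le> (\<Sum>s\<in>{1..R}. \<Sum>I\<in>Is s. card (\<Union>T\<in>Ts s. Ev I T))"
    by (intro sum_mono card_UN_le fIs)
  also have "\<dots> \<le> (\<Sum>s\<in>{1..R}. \<Sum>I\<in>Is s. \<Sum>T\<in>Ts s. card (Ev I T))"
    by (intro sum_mono card_UN_le fTs)
  finally have c1': "card {\<phi> \<in> cnf_space m n D. exp_bad \<delta> \<rho> m n D \<phi>}
      \<le> (\<Sum>s\<in>{1..R}. \<Sum>I\<in>Is s. \<Sum>T\<in>Ts s. card (Ev I T))" .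
  have c1: "real (card {\<phi> \<in> cnf_space m n D. exp_bad \<delta> \<rho> m n D \<phi>})
      \<le> (\<Sum>s\<in>{1..R}. \<Sum>I\<in>Is s. \<Sum>T\<in>Ts s. real (card (Ev I T)))"
    using of_nat_mono[OF c1', where 'a=real] by simp
  have cC: "0 < real (card (cnf_space m n D))" unfolding cnf_card using cCS CS_def by simp
  have ev: "real (card (Ev I T)) / real (card (cnf_space m n D)) \<le> (2 ^ D * (real (tt s) / real n) ^ k) ^ s"
    if I: "I \<in> Is s" and T: "T \<in> Ts s" for s I T
  proof -
    have Im: "I \<subseteq> {0..<m}" "card I = s" using I unfolding Is_def by auto
    have sm: "s \<le> m" using card_mono[OF _ Im(1)] Im(2) by simp
    have GC: "G T \<subseteq> CS" unfolding G_def by auto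
    have "card (Ev I T) = card (G T) ^ s * card CS ^ (m - s)"
      unfolding Ev_def CS_def using cnf_restr_card[OF Im(1), of "G T" n D] GC Im(2) CS_def by simp
    then have "real (card (Ev I T)) / real (card (cnf_space m n D))
        = real (card (G T)) ^ s * real (card CS) ^ (m - s) / real (card CS) ^ m"
      unfolding cnf_card CS_def by simp
    also have "\<dots> = (real (card (G T)) / real (card CS)) ^ s"
    proof -
      have "real (card CS) ^ m = real (card CS) ^ s * real (card CS) ^ (m - s)"
        using sm by (simp add: power_add[symmetric])
      then show ?thesis using cCS by (simp add: power_divide)
    qed
    also have "\<dots> \<le> (2 ^ D * (real (tt s) / real n) ^ k) ^ s"
    proof (intro power_mono)
      show "real (card (G T)) / real (card CS) \<le> 2 ^ D * (real (tt s) / real n) ^ k"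
        unfolding G_def CS_def using hit_ratio[of T n "tt s" k D] T kD Dn n0 unfolding Ts_def by auto
    qed simp
    finally show ?thesis .
  qed
  have "real (card {\<phi> \<in> cnf_space m n D. exp_bad \<delta> \<rho> m n D \<phi>}) / real (card (cnf_space m n D))
      \<le> (\<Sum>s\<in>{1..R}. \<Sum>I\<in>Is s. \<Sum>T\<in>Ts s. real (card (Ev I T))) / real (card (cnf_space m n D))"
    using c1 cC by (intro divide_right_mono) auto
  also have "\<dots> = (\<Sum>s\<in>{1..R}. \<Sum>I\<in>Is s. \<Sum>T\<in>Ts s. real (card (Ev I T)) / real (card (cnf_space m n D)))"
    by (simp add: sum_divide_distrib)
  also have "\<dots> \<le> (\<Sum>s\<in>{1..R}. \<Sum>I\<in>Is s. \<Sum>T\<in>Ts s. (2 ^ D * (real (tt s) / real n) ^ k) ^ s)"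
    by (intro sum_mono ev) auto
  also have "\<dots> = (\<Sum>s\<in>{1..R}. real (m choose s) * (real (n choose tt s) * (2 ^ D * (real (tt s) / real n) ^ k) ^ s))"
    unfolding Is_def Ts_def by (simp add: n_subsets)
  also have "\<dots> \<le> (\<Sum>s\<in>{1..R}. real (m choose s) * 2 ^ (D * s) * (exp 1 * \<rho>) powr (\<delta> * real D * real s / 2))"
  proof (intro sum_mono)
    fix s assume s: "s \<in> {1..R}"
    have "real (n choose tt s) * (2 ^ D * (real (tt s) / real n) ^ k) ^ s
        = 2 ^ (D * s) * (real (n choose tt s) * (real (tt s) / real n) ^ (k * s))"
      by (simp add: power_mult_distrib power_mult[symmetric] mult_ac)
    also have "\<dots> \<le> 2 ^ (D * s) * (exp 1 * \<rho>) powr (\<delta> * real D * real s / 2)"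
      using term_bound[OF n0 ttn[of s] er r0 kk tts[of s] d0] s by (intro mult_left_mono) auto
    finally show "real (m choose s) * (real (n choose tt s) * (2 ^ D * (real (tt s) / real n) ^ k) ^ s)
        \<le> real (m choose s) * 2 ^ (D * s) * (exp 1 * \<rho>) powr (\<delta> * real D * real s / 2)"
      by (simp add: mult_left_mono mult.assoc)
  qed
  finally show ?thesis unfolding R_def .
qed



lemma prob_bound:
  fixes m n D :: nat and \<delta> \<rho> :: real
  assumes Dn: "D \<le> n" and n0: "0 < n" and D0: "0 < D" and d0: "0 < \<delta>" and d1: "\<delta> \<le> 1/10"
    and r0: "0 < \<rho>" and r1: "\<rho> \<le> 1" and er: "exp 1 * \<rho> \<le> 1"
    and rp: "\<And>y. (exp 1 * \<rho>) powr (\<delta> * y / 2) = 2 powr (-3 * y)"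
    and q1: "real m * 2 powr (-2 * real D) \<le> 1"
  shows "measure_pmf.prob (pair_pmf (random_cnf m n D) (random_partition n))
           {(\<phi>, X). good_partition \<delta> (1/5) \<rho> m n D \<phi> X ({0..<n} - X)}
         \<ge> 1 - (2 * real m * 2 powr (-1.1 * real D) + real n * (real m * 2 powr (-2 * real D)))"
proof -
  define CNF where "CNF = cnf_space m n D"
  define PX where "PX = Pow {0..<(n::nat)}"
  define \<Omega> where "\<Omega> = CNF \<times> PX"
  define Good where "Good = {(\<phi>, X). good_partition \<delta> (1/5) \<rho> m n D \<phi> X ({0..<n} - X)}"
  define Q where "Q \<omega> i \<longleftrightarrow> (1-\<delta>) * real D < real (card (fst (fst \<omega> i) \<inter> snd \<omega>)) \<or>
                 (1-\<delta>) * real D < real (card (fst (fst \<omega> i) \<inter> ({0..<n} - snd \<omega>)))" for \<omega> :: "cnf \<times> nat set" and i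
  define K :: real where "K = 2 powr (0.7 * real D)"
  define Bad1 where "Bad1 = {\<omega> \<in> \<Omega>. K < real (card {i \<in> {0..<m}. Q \<omega> i})}"
  define Bad2 where "Bad2 = {\<omega> \<in> \<Omega>. exp_bad \<delta> \<rho> m n D (fst \<omega>)}"
  have fCNF: "finite CNF" unfolding CNF_def by (rule finite_cnf)
  have nCNF: "CNF \<noteq> {}"
  proof -
    have "card CNF = card (clause_space n D) ^ m" unfolding CNF_def by (rule cnf_card)
    moreover have "0 < card (clause_space n D)" using finite_cs cs_nonempty[OF Dn] by (simp add: card_gt_0_iff)
    ultimately show ?thesis using fCNF by auto
  qed
  have fPX: "finite PX" "PX \<noteq> {}" unfolding PX_def by auto
  have cPX: "card PX = 2 ^ n" unfolding PX_def by (simp add: card_Pow)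
  have fO: "finite \<Omega>" unfolding \<Omega>_def using fCNF fPX by simp
  have cO: "card \<Omega> = card CNF * 2 ^ n" unfolding \<Omega>_def using cPX by (simp add: card_cartesian_product)
  have cCNF: "0 < card CNF" using fCNF nCNF by (simp add: card_gt_0_iff)
  have cO0: "0 < real (card \<Omega>)" using cO cCNF by simp
  have K0: "0 < K" unfolding K_def by simp
  have pm: "pair_pmf (random_cnf m n D) (random_partition n) = pmf_of_set \<Omega>"
    unfolding random_cnf_def random_partition_def \<Omega>_def CNF_def[symmetric] PX_def[symmetric]
    using fCNF nCNF fPX by (intro pmf_of_set_pair) auto
  have prob: "measure_pmf.prob (pair_pmf (random_cnf m n D) (random_partition n)) Good = real (card (\<Omega> \<inter> Good)) / real (card \<Omega>)"
    unfolding pm using fO fCNF nCNF fPX by (subst measure_pmf_of_set) (auto simp: \<Omega>_def)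
  have sub: "\<Omega> - Bad1 - Bad2 \<subseteq> \<Omega> \<inter> Good"
  proof
    fix \<omega> assume w: "\<omega> \<in> \<Omega> - Bad1 - Bad2"
    obtain \<phi> X where om: "\<omega> = (\<phi>, X)" by (cases \<omega>)
    have wO: "\<omega> \<in> \<Omega>" using w by blast
    then have "(\<phi>, X) \<in> CNF \<times> PX" unfolding om \<Omega>_def .
    then have \<phi>: "\<phi> \<in> cnf_space m n D" and X: "X \<subseteq> {0..<n}" unfolding CNF_def PX_def by auto
    have "\<omega> \<notin> Bad1" using w by blast
    then have "\<not> K < real (card {i \<in> {0..<m}. Q \<omega> i})" using wO unfolding Bad1_def by blast
    then have cnt: "real (card {i \<in> {0..<m}. (1-\<delta>) * real D < real (card (fst (\<phi> i) \<inter> X)) \<or>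
                 (1-\<delta>) * real D < real (card (fst (\<phi> i) \<inter> ({0..<n} - X)))}) \<le> 2 powr (0.7 * real D)"
      unfolding K_def Q_def om by simp
    have "\<omega> \<notin> Bad2" using w by blast
    then have nb: "\<not> exp_bad \<delta> \<rho> m n D \<phi>" using wO om unfolding Bad2_def by auto
    have "good_partition \<delta> (1/5) \<rho> m n D \<phi> X ({0..<n} - X)"
      by (rule good_det[OF \<phi> X d0 d1 r0 r1 D0 cnt nb])
    then have "\<omega> \<in> Good" unfolding Good_def om by simp
    then show "\<omega> \<in> \<Omega> \<inter> Good" using wO by blast
  qed
  have fB1: "finite Bad1" "finite Bad2" unfolding Bad1_def Bad2_def using fO by auto
  have "real (card \<Omega>) - real (card Bad1) - real (card Bad2) \<le> real (card (\<Omega> - Bad1 - Bad2))"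
  proof -
    have "card \<Omega> \<le> card (\<Omega> - Bad1 - Bad2) + card Bad1 + card Bad2"
    proof -
      have "\<Omega> \<subseteq> (\<Omega> - Bad1 - Bad2) \<union> Bad1 \<union> Bad2" by auto
      then have "card \<Omega> \<le> card ((\<Omega> - Bad1 - Bad2) \<union> Bad1 \<union> Bad2)" using fO fB1 by (intro card_mono) auto
      also have "\<dots> \<le> card ((\<Omega> - Bad1 - Bad2) \<union> Bad1) + card Bad2" by (rule card_Un_le)
      also have "\<dots> \<le> card (\<Omega> - Bad1 - Bad2) + card Bad1 + card Bad2"
        using card_Un_le[of "\<Omega> - Bad1 - Bad2" Bad1] by linarith
      finally show ?thesis .
    qed
    then have "real (card \<Omega>) \<le> real (card (\<Omega> - Bad1 - Bad2) + card Bad1 + card Bad2)" by (rule of_nat_mono)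
    then show ?thesis by simp
  qed
  also have "\<dots> \<le> real (card (\<Omega> \<inter> Good))" using sub fO by (intro of_nat_mono card_mono) auto
  finally have main: "real (card \<Omega>) - real (card Bad1) - real (card Bad2) \<le> real (card (\<Omega> \<inter> Good))" .
  have perI: "real (card {\<omega> \<in> \<Omega>. Q \<omega> i}) \<le> real (card CNF) * (2 ^ n * 2 * 2 powr (-0.4 * real D))" if i: "i < m" for i
  proof -
    have e: "{\<omega> \<in> \<Omega>. Q \<omega> i} = Sigma CNF (\<lambda>\<phi>. {X \<in> PX. Q (\<phi>, X) i})" unfolding \<Omega>_def by auto
    have "card {\<omega> \<in> \<Omega>. Q \<omega> i} = (\<Sum>\<phi>\<in>CNF. card {X \<in> PX. Q (\<phi>, X) i})"
      unfolding e using fCNF fPX by (subst card_SigmaI) auto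
    then have "real (card {\<omega> \<in> \<Omega>. Q \<omega> i}) = (\<Sum>\<phi>\<in>CNF. real (card {X \<in> PX. Q (\<phi>, X) i}))" by simp
    also have "\<dots> \<le> (\<Sum>\<phi>\<in>CNF. 2 ^ n * 2 * 2 powr (-0.4 * real D))"
    proof (intro sum_mono)
      fix \<phi> assume "\<phi> \<in> CNF"
      then have "fst (\<phi> i) \<subseteq> {0..<n}" "card (fst (\<phi> i)) = D" using cnf_clause[of \<phi> m n D i] i unfolding CNF_def by auto
      from per_clause_count[OF this d0 d1]
      show "real (card {X \<in> PX. Q (\<phi>, X) i}) \<le> 2 ^ n * 2 * 2 powr (-0.4 * real D)"
        unfolding PX_def Q_def by simp
    qed
    finally show ?thesis by simp
  qed
  have b1: "real (card Bad1) / real (card \<Omega>) \<le> 2 * real m * 2 powr (-1.1 * real D)"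
  proof -
    have "real (card Bad1) \<le> (\<Sum>i<m. real (card {\<omega> \<in> \<Omega>. Q \<omega> i})) / K"
      unfolding Bad1_def by (rule markov_count[OF fO K0])
    also have "\<dots> \<le> (\<Sum>i<m. real (card CNF) * (2 ^ n * 2 * 2 powr (-0.4 * real D))) / K"
      using K0 perI by (intro divide_right_mono sum_mono) auto
    also have "\<dots> = real (card \<Omega>) * (2 * real m * (2 powr (-0.4 * real D) / K))"
      unfolding cO by (simp add: mult_ac)
    also have "2 powr (-0.4 * real D) / K = 2 powr (-1.1 * real D)"
      unfolding K_def by (simp add: powr_diff[symmetric])
    finally show ?thesis using cO0 by (simp add: field_simps)
  qed
  have b2: "real (card Bad2) / real (card \<Omega>) \<le> real n * (real m * 2 powr (-2 * real D))"
  proof -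
    define q where "q = real m * 2 powr (-2 * real D)"
    define R where "R = nat \<lfloor>\<rho> * real n / real D\<rfloor>"
    have q0: "0 \<le> q" unfolding q_def by simp
    have e: "Bad2 = {\<phi> \<in> CNF. exp_bad \<delta> \<rho> m n D \<phi>} \<times> PX" unfolding Bad2_def \<Omega>_def by auto
    have "real (card Bad2) / real (card \<Omega>) = real (card {\<phi> \<in> CNF. exp_bad \<delta> \<rho> m n D \<phi>}) / real (card CNF)"
      unfolding e cO using cPX by (simp add: card_cartesian_product)
    also have "\<dots> \<le> (\<Sum>s\<in>{1..R}. real (m choose s) * 2 ^ (D * s) * (exp 1 * \<rho>) powr (\<delta> * real D * real s / 2))"
      unfolding CNF_def R_def by (rule exp_bad_count[OF Dn n0 D0 d0 d1 r0 r1 er])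
    also have "\<dots> \<le> (\<Sum>s\<in>{1..R}. q)"
    proof (intro sum_mono)
      fix s assume s: "s \<in> {1..R}"
      have "(exp 1 * \<rho>) powr (\<delta> * real D * real s / 2) = 2 powr (-3 * (real D * real s))"
        using rp[of "real D * real s"] by (simp add: mult_ac)
      also have "\<dots> = 2 powr (- real (D * s)) * (2 powr (-2 * real D)) ^ s"
        by (simp add: powr_realpow[symmetric] powr_powr powr_add[symmetric] algebra_simps)
      finally have a: "(exp 1 * \<rho>) powr (\<delta> * real D * real s / 2) = 2 powr (- real (D * s)) * (2 powr (-2 * real D)) ^ s" .
      have b: "(2::real) ^ (D * s) * 2 powr (- real (D * s)) = 1"
      proof -
        have h: "(2::real) powr (real (D * s)) = 2 ^ (D * s)" by (rule powr_realpow) simp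
        show ?thesis by (subst powr_minus, subst h) simp
      qed
      have c: "real (m choose s) \<le> real m ^ s"
      proof (cases "s \<le> m")
        case True then show ?thesis using binomial_le_pow[OF True] by (metis of_nat_le_iff of_nat_power)
      next
        case False then show ?thesis by (simp add: binomial_eq_0)
      qed
      have "real (m choose s) * 2 ^ (D * s) * (exp 1 * \<rho>) powr (\<delta> * real D * real s / 2)
          = real (m choose s) * (2 powr (-2 * real D)) ^ s"
        unfolding a using b by (simp add: mult_ac)
      also have "\<dots> \<le> real m ^ s * (2 powr (-2 * real D)) ^ s" using c by (intro mult_right_mono) auto
      also have "\<dots> = q ^ s" unfolding q_def by (simp add: power_mult_distrib)
      also have "\<dots> \<le> q ^ 1" using s q0 q1 unfolding q_def by (intro power_decreasing) auto
      finally show "real (m choose s) * 2 ^ (D * s) * (exp 1 * \<rho>) powr (\<delta> * real D * real s / 2) \<le> q" by simp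
    qed
    also have "\<dots> = real R * q" by simp
    also have "\<dots> \<le> real n * q"
    proof (intro mult_right_mono q0)
      have "real R \<le> \<rho> * real n / real D" unfolding R_def using r0 by (intro nat_floor_le_real) simp
      also have "\<dots> \<le> real n"
      proof -
        have "\<rho> * real n \<le> 1 * real n" using r1 by (intro mult_right_mono) auto
        also have "\<dots> \<le> real n * real D" using D0 mult_left_mono[of 1 "real D" "real n"] by simp
        finally show ?thesis using D0 by (simp add: field_simps)
      qed
      finally show "real R \<le> real n" .
    qed
    finally show ?thesis unfolding q_def .
  qed
  have "1 - (2 * real m * 2 powr (-1.1 * real D) + real n * (real m * 2 powr (-2 * real D)))
      \<le> 1 - real (card Bad1) / real (card \<Omega>) - real (card Bad2) / real (card \<Omega>)" using b1 b2 by simp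
  also have "\<dots> = (real (card \<Omega>) - real (card Bad1) - real (card Bad2)) / real (card \<Omega>)"
    using cO0 by (simp add: field_simps)
  also have "\<dots> \<le> real (card (\<Omega> \<inter> Good)) / real (card \<Omega>)"
    using main cO0 by (intro divide_right_mono) auto
  finally have "1 - (2 * real m * 2 powr (-1.1 * real D) + real n * (real m * 2 powr (-2 * real D)))
      \<le> measure_pmf.prob (pair_pmf (random_cnf m n D) (random_partition n)) Good" unfolding prob .
  then show ?thesis unfolding Good_def .
qed



lemma pow_bound:
  assumes n1: "1 \<le> n" and c0: "0 < c" and a0: "0 \<le> a"
  shows "2 powr (- a * real (width c n)) \<le> real n powr (- a * c)"
proof -
  have l0: "0 \<le> log 2 (real n)" using n1 by simp
  have w: "c * log 2 (real n) \<le> real (width c n)"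
  proof -
    have "0 \<le> c * log 2 (real n)" using c0 l0 by simp
    then have "real (nat \<lceil>c * log 2 (real n)\<rceil>) = real_of_int \<lceil>c * log 2 (real n)\<rceil>" by simp
    then show ?thesis unfolding width_def using le_of_int_ceiling[of "c * log 2 (real n)"] by linarith
  qed
  have "- a * real (width c n) \<le> - a * (c * log 2 (real n))" using w a0 by (intro mult_left_mono_neg) auto
  then have "2 powr (- a * real (width c n)) \<le> 2 powr (- a * (c * log 2 (real n)))" by (intro powr_mono) auto
  also have "\<dots> = (2 powr (log 2 (real n))) powr (- a * c)" by (simp add: powr_powr mult_ac)
  also have "\<dots> = real n powr (- a * c)" using n1 by simp
  finally show ?thesis .
qed

lemma n_powr_mono:
  assumes "1 \<le> n" "a \<le> b" shows "real n powr a \<le> real n powr b"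
  using assms by (intro powr_mono) auto

lemma mD_bound:
  assumes a0: "0 < \<alpha>"
  shows "real (num_clauses \<alpha> c n) * 2 powr (- b * real (width c n)) \<le> \<alpha> * real n * 2 powr ((1 - b) * real (width c n))"
proof -
  define D where "D = width c n"
  have m: "real (num_clauses \<alpha> c n) \<le> \<alpha> * 2 ^ D * real n"
    unfolding num_clauses_def D_def[symmetric] using a0 by (intro nat_floor_le_real) simp
  have "real (num_clauses \<alpha> c n) * 2 powr (- b * real D) \<le> (\<alpha> * 2 ^ D * real n) * 2 powr (- b * real D)"
    using m by (intro mult_right_mono) auto
  also have "\<dots> = \<alpha> * real n * (2 powr (real D) * 2 powr (- b * real D))"
    by (simp add: powr_realpow mult_ac)
  also have "\<dots> = \<alpha> * real n * 2 powr ((1 - b) * real D)"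
    by (simp add: powr_add[symmetric] algebra_simps)
  finally show ?thesis unfolding D_def .
qed

theorem mainTheorem2:
  fixes c \<alpha> \<delta> :: real
  assumes "c \<ge> 40" and "\<alpha> > 0" and "0 < \<delta>" and "\<delta> \<le> 1/10"
  shows "\<exists>\<epsilon>>0. \<exists>\<rho>>0.
    (\<lambda>n. measure_pmf.prob
           (pair_pmf (random_cnf (num_clauses \<alpha> c n) n (width c n)) (random_partition n))
           {(\<phi>, X). good_partition \<delta> \<epsilon> \<rho> (num_clauses \<alpha> c n) n (width c n)
                        \<phi> X ({0..<n} - X)})
    \<longlonglongrightarrow> 1"
proof -
  note c40 = assms(1) and a0 = assms(2) and d0 = assms(3) and d1 = assms(4)
  have c0: "0 < c" using c40 by simp
  define \<rho> :: real where "\<rho> = 2 powr (- 6 / \<delta>) / exp 1"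
  have r0: "0 < \<rho>" unfolding \<rho>_def by simp
  have er': "exp 1 * \<rho> = 2 powr (- 6 / \<delta>)" unfolding \<rho>_def by simp
  have er: "exp 1 * \<rho> \<le> 1"
  proof -
    have "(2::real) powr (- 6 / \<delta>) \<le> 2 powr 0" using d0 by (intro powr_mono) auto
    then show ?thesis unfolding er' by simp
  qed
  have r1: "\<rho> \<le> 1"
  proof -
    have "1 \<le> exp (1::real)" using exp_ge_add_one_self[of "1::real"] by simp
    then have "1 * \<rho> \<le> exp 1 * \<rho>" using r0 by (intro mult_right_mono) auto
    then have "\<rho> \<le> exp 1 * \<rho>" by simp
    then show ?thesis using er by linarith
  qed
  have rp: "(exp 1 * \<rho>) powr (\<delta> * y / 2) = 2 powr (-3 * y)" for y
    unfolding er' using d0 by (simp add: powr_powr field_simps)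
  define P where "P n = measure_pmf.prob
           (pair_pmf (random_cnf (num_clauses \<alpha> c n) n (width c n)) (random_partition n))
           {(\<phi>, X). good_partition \<delta> (1/5) \<rho> (num_clauses \<alpha> c n) n (width c n)
                        \<phi> X ({0..<n} - X)}" for n
  define g where "g n = 2 * \<alpha> * real n * real n powr (-4) + \<alpha> * real n ^ 2 * real n powr (-40)" for n :: nat
  have g0: "g \<longlonglongrightarrow> 0" unfolding g_def by real_asymp
  have ev1: "eventually (\<lambda>n::nat. c * log 2 (real n) + 1 \<le> real n) at_top" using c0 by real_asymp
  have ev2: "eventually (\<lambda>n::nat. \<alpha> * real n * real n powr (-40) \<le> 1) at_top" by real_asymp
  have ev3: "eventually (\<lambda>n::nat. 2 \<le> n) at_top" by (rule eventually_ge_at_top)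
  have low: "eventually (\<lambda>n. 1 - g n \<le> P n) at_top"
    using ev1 ev2 ev3
  proof eventually_elim
    case (elim n)
    define D where "D = width c n"
    define m where "m = num_clauses \<alpha> c n"
    have n1: "1 \<le> n" "0 < n" using elim by auto
    have l1: "1 \<le> log 2 (real n)" using elim by simp
    have Dub: "real D \<le> c * log 2 (real n) + 1"
    proof -
      have "0 \<le> c * log 2 (real n)" using c0 l1 by simp
      then have "real D = real_of_int \<lceil>c * log 2 (real n)\<rceil>" unfolding D_def width_def by simp
      then show ?thesis using ceiling_correct[of "c * log 2 (real n)"] by linarith
    qed
    have Dn: "D \<le> n" using Dub elim by linarith
    have D0: "0 < D"
    proof -
      have "c * 1 \<le> c * log 2 (real n)" using c0 l1 by (intro mult_left_mono) auto
      then have "0 < c * log 2 (real n)" using c0 by simp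
      then have "0 < \<lceil>c * log 2 (real n)\<rceil>" by simp
      then show ?thesis unfolding D_def width_def by simp
    qed
    have pD: "2 powr (- a * real D) \<le> real n powr (- a * c)" if "0 \<le> a" for a
      unfolding D_def using pow_bound[OF n1(1) c0 that] .
    have q1': "real m * 2 powr (-2 * real D) \<le> \<alpha> * real n * real n powr (-40)"
    proof -
      have "real m * 2 powr (-2 * real D) \<le> \<alpha> * real n * 2 powr ((1 - 2) * real D)"
        unfolding m_def D_def by (rule mD_bound[OF a0])
      also have "\<dots> \<le> \<alpha> * real n * real n powr (- 1 * c)"
        using pD[of 1] a0 by (intro mult_left_mono) auto
      also have "\<dots> \<le> \<alpha> * real n * real n powr (-40)"
        using n1 c40 a0 by (intro mult_left_mono n_powr_mono) auto
      finally show ?thesis .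
    qed
    have q1: "real m * 2 powr (-2 * real D) \<le> 1" using q1' elim by linarith
    have f1: "2 * real m * 2 powr (-1.1 * real D) \<le> 2 * \<alpha> * real n * real n powr (-4)"
    proof -
      have "real m * 2 powr (-1.1 * real D) \<le> \<alpha> * real n * 2 powr ((1 - 1.1) * real D)"
        unfolding m_def D_def by (rule mD_bound[OF a0])
      also have "\<dots> \<le> \<alpha> * real n * real n powr (- 0.1 * c)"
        using pD[of "0.1"] a0 by (intro mult_left_mono) auto
      also have "\<dots> \<le> \<alpha> * real n * real n powr (-4)"
        using n1 c40 a0 by (intro mult_left_mono n_powr_mono) auto
      finally show ?thesis by simp
    qed
    have f2: "real n * (real m * 2 powr (-2 * real D)) \<le> \<alpha> * real n ^ 2 * real n powr (-40)"
      using mult_left_mono[OF q1', of "real n"] by (simp add: power2_eq_square mult_ac)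
    have "1 - g n \<le> 1 - (2 * real m * 2 powr (-1.1 * real D) + real n * (real m * 2 powr (-2 * real D)))"
      unfolding g_def using f1 f2 by simp
    also have "\<dots> \<le> P n"
      unfolding P_def m_def[symmetric] D_def[symmetric]
      by (rule prob_bound[OF Dn n1(2) D0 d0 d1 r0 r1 er rp q1])
    finally show ?case .
  qed
  have up: "eventually (\<lambda>n. P n \<le> 1) at_top" by (simp add: P_def)
  have "(\<lambda>n. 1 - g n) \<longlonglongrightarrow> 1 - 0" by (intro tendsto_intros g0)
  then have lo: "(\<lambda>n. 1 - g n) \<longlonglongrightarrow> 1" by simp
  have "P \<longlonglongrightarrow> 1" by (rule tendsto_sandwich[OF low up lo tendsto_const])
  then show ?thesis unfolding P_def using r0 by (intro exI[of _ "1/5"] exI[of _ \<rho>]) auto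
qed

end
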